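(* Let $A,\mathbf v\in M_2(\mathbb C)$ and assume $\operatorname{spec}(A)\subset\{z\in\mathbb C:|\operatorname{Im} z|<\pi\}$. Then, with $\log$ the principal matrix logarithm, \[\frac{\mathrm d}{\mathrm dt}\log\big(\exp(A)\exp(t\mathbf v)\big)\Big|_{t=0}=\mathbf v+\tfrac12[A,\mathbf v]+\tfrac14\,\mathcal C(D_A)\,[A,[A,\mathbf v]]\] and \[\frac{\mathrm d}{\mathrm dt}\log\big(\exp(t\mathbf v)\exp(A)\big)\Big|_{t=0}=\mathbf v-\tfrac12[A,\mathbf v]+\tfrac14\,\mathcal C(D_A)\,[A,[A,\mathbf v]].\]
   Context: $[X,Y]=XY-YX$. For a $2\times2$ matrix $A$, $D_A=\det A-\frac{(\operatorname{tr}A)^2}{4}$. $\operatorname{Cos}$ and $\operatorname{Sin}$ are the entire functions $\operatorname{Cos}(z)=\sum_{n\ge0}(-1)^n\frac{z^n}{(2n)!}$, $\operatorname{Sin}(z)=\sum_{n\ge0}(-1)^n\frac{z^n}{(2n+1)!}$ (so $\operatorname{Cos}(x)=\cos\sqrt x$, $\operatorname{Sin}(x)=\sin\sqrt x/\sqrt x$ for $x>0$), $\operatorname{Cot}=\operatorname{Cos}/\operatorname{Sin}$, and $\mathcal C(z)=\frac{1-\operatorname{Cot}(z)}{z}$, a meromorphic function holomorphic except at $z=k^2\pi^2$, $k\ge1$ integer, with $\mathcal C(0)=1/3$. *)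

theory Defs
  imports "HOL-Analysis.Analysis"
begin

type_synonym cmat2 = "complex^2^2"

primrec mpow :: "cmat2 \<Rightarrow> nat \<Rightarrow> cmat2" where
  "mpow A 0 = mat 1"
| "mpow A (Suc n) = A ** mpow A n"

definition mexp :: "cmat2 \<Rightarrow> cmat2" where
  "mexp A = (\<Sum>n. (1 / fact n) *\<^sub>R mpow A n)"

definition spec :: "cmat2 \<Rightarrow> complex set" where
  "spec A = {z. det (A - mat z) = 0}"

definition mlog :: "cmat2 \<Rightarrow> cmat2" where
  "mlog M = (THE X. mexp X = M \<and> (\<forall>z\<in>spec X. \<bar>Im z\<bar> < pi))"

definition comm :: "cmat2 \<Rightarrow> cmat2 \<Rightarrow> cmat2" where
  "comm X Y = X ** Y - Y ** X"

definition csmul :: "complex \<Rightarrow> cmat2 \<Rightarrow> cmat2" where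
  "csmul c M = (\<chi> i j. c * M $ i $ j)"

definition DA :: "cmat2 \<Rightarrow> complex" where
  "DA A = det A - (trace A)^2 / 4"

definition Cos :: "complex \<Rightarrow> complex" where
  "Cos z = (\<Sum>n. (-1)^n * z^n / of_nat (fact (2*n)))"

definition Sin :: "complex \<Rightarrow> complex" where
  "Sin z = (\<Sum>n. (-1)^n * z^n / of_nat (fact (2*n+1)))"

definition Cot :: "complex \<Rightarrow> complex" where
  "Cot z = Cos z / Sin z"

definition Ccal :: "complex \<Rightarrow> complex" where
  "Ccal z = (if z = 0 then 1/3 else (1 - Cot z) / z)"

end

theory Submission
  imports Defs
begin


lemma summable_exp_real: "summable (\<lambda>n. (x::real) ^ n / fact n)"
  using summable_exp[of x] by (simp add: divide_inverse mult.commute)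


definition cc :: "nat \<Rightarrow> complex" where "cc n = (-1)^n / of_nat (fact (2*n))"
definition ss :: "nat \<Rightarrow> complex" where "ss n = (-1)^n / of_nat (fact (2*n+1))"

lemma Cos_eq: "Cos z = (\<Sum>n. cc n * z^n)"
  unfolding Cos_def cc_def by (simp add: field_simps)
lemma Sin_eq: "Sin z = (\<Sum>n. ss n * z^n)"
  unfolding Sin_def ss_def by (simp add: field_simps)

lemma cc_summable: "summable (\<lambda>n. cc n * z^n)"
proof (rule summable_comparison_test[OF _ summable_exp_real[of "norm z"]])
  show "\<exists>N. \<forall>n\<ge>N. norm (cc n * z ^ n) \<le> norm z ^ n / fact n"
  proof (intro exI allI impI)
    fix n :: nat
    have "fact n \<le> (fact (2*n) :: real)" by (intro fact_mono) auto
    moreover have "(0::real) < fact n" by simp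
    ultimately show "norm (cc n * z ^ n) \<le> norm z ^ n / fact n"
      by (simp add: cc_def norm_mult norm_divide norm_power divide_simps mult_left_mono)
  qed
qed

lemma norm_ss: "norm (ss n * z^n) = norm z ^ n / fact (2*n+1)"
proof -
  have "norm (of_nat (fact (2*n+1)) :: complex) = fact (2*n+1)"
    by (metis norm_of_nat of_nat_fact)
  then show ?thesis by (simp add: ss_def norm_mult norm_divide norm_power)
qed

lemma ss_summable: "summable (\<lambda>n. ss n * z^n)"
proof (rule summable_comparison_test[OF _ summable_exp_real[of "norm z"]])
  show "\<exists>N. \<forall>n\<ge>N. norm (ss n * z ^ n) \<le> norm z ^ n / fact n"
  proof (intro exI allI impI)
    fix n :: nat
    have "fact n \<le> (fact (2*n+1) :: real)" by (intro fact_mono) auto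
    moreover have "(0::real) < fact n" by simp
    ultimately show "norm (ss n * z ^ n) \<le> norm z ^ n / fact n"
      unfolding norm_ss by (intro divide_left_mono) auto
  qed
qed

lemma fact_2Suc: "(of_nat (fact (2 * Suc n)) :: complex) = (2 * of_nat n+2) * of_nat (fact (2*n+1))"
proof -
  have "2 * Suc n = Suc (2*n+1)" by simp
  then have "(fact (2 * Suc n) :: complex) = of_nat (Suc (2*n+1)) * fact (2*n+1)" by (simp only: fact_Suc)
  then show ?thesis by (simp add: algebra_simps)
qed

lemma fact_ne0: "(of_nat (fact m) :: complex) \<noteq> 0" by simp

lemma aux1: "(F::complex) \<noteq> 0 \<Longrightarrow> (of_nat (Suc n) :: complex) * ((-1)^Suc n / ((2 * of_nat n+2) * F))
     = - ((-1)^n / F) / 2"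
proof -
  assume F: "F \<noteq> 0"
  have e: "(2 * of_nat n+2 :: complex) = 2 * of_nat (Suc n)" by simp
  have x: "(of_nat (Suc n) :: complex) \<noteq> 0" by (metis of_nat_eq_0_iff Suc_neq_Zero)
  have g: "\<And>x a. x \<noteq> 0 \<Longrightarrow> (x::complex) * (-1 * a / ((2*x) * F)) = -(a/F)/2"
    using F by (simp add: field_simps)
  show ?thesis unfolding e power_Suc by (rule g[OF x])
qed

lemma diffs_cc: "diffs cc n = - ss n / 2"
  unfolding diffs_def cc_def ss_def fact_2Suc by (rule aux1[OF fact_ne0])

lemma fact_odd: "(of_nat (fact (2*n+1)) :: complex) = (2 * of_nat n+1) * of_nat (fact (2*n))"
proof -
  have "(fact (Suc (2*n)) :: complex) = of_nat (Suc (2*n)) * fact (2*n)" by (simp only: fact_Suc)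
  then show ?thesis by (simp add: algebra_simps)
qed

lemma aux2: "(F::complex) \<noteq> 0 \<Longrightarrow> (2 * of_nat n+1::complex) \<noteq> 0 \<Longrightarrow>
   (-1)^n / F - (-1)^n / ((2 * of_nat n+1) * F) = 2 * of_nat n * ((-1)^n / ((2 * of_nat n+1) * F))"
proof -
  assume F: "F \<noteq> 0" and k: "(2 * of_nat n+1::complex) \<noteq> 0"
  have "\<And>k a. k \<noteq> 0 \<Longrightarrow> a / F - a/(k*F) = (k - 1) * (a / (k * F))" using F by (simp add: field_simps)
  from this[OF k] show ?thesis by simp
qed

lemma cc_ss_rel: "cc n - ss n = 2 * of_nat n * ss n"
proof -
  have "(2 * of_nat n+1::complex) = of_nat (Suc (2*n))" by simp
  then have "(2 * of_nat n+1::complex) \<noteq> 0" by (metis of_nat_eq_0_iff Suc_neq_Zero)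
  then show ?thesis unfolding cc_def ss_def fact_odd by (rule aux2[OF fact_ne0])
qed
lemma Cos_sums: "(\<lambda>n. cc n * z^n) sums Cos z"
  unfolding Cos_eq by (rule summable_sums[OF cc_summable])
lemma Sin_sums: "(\<lambda>n. ss n * z^n) sums Sin z"
  unfolding Sin_eq by (rule summable_sums[OF ss_summable])

lemma Cos_deriv: "(Cos has_field_derivative (- Sin z / 2)) (at z)"
proof -
  have "(\<lambda>n. diffs cc n * z^n) sums (- Sin z / 2)"
  proof -
    have "(\<lambda>n. - (ss n * z^n) / 2) sums (- Sin z / 2)"
      using sums_divide[OF sums_minus[OF Sin_sums[of z]], of 2] by simp
    then show ?thesis by (simp add: diffs_cc)
  qed
  then have "(\<Sum>n. diffs cc n * z^n) = - Sin z / 2" by (rule sums_unique[symmetric])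
  moreover have "((\<lambda>x. \<Sum>n. cc n * x^n) has_field_derivative (\<Sum>n. diffs cc n * z^n)) (at z)"
    by (rule termdiffs_strong_converges_everywhere[OF cc_summable])
  ultimately show ?thesis unfolding Cos_eq[abs_def] by simp
qed

definition Sind :: "complex \<Rightarrow> complex" where "Sind z = (\<Sum>n. diffs ss n * z^n)"

lemma Sin_deriv: "(Sin has_field_derivative Sind z) (at z)"
  unfolding Sin_eq[abs_def] Sind_def
  by (rule termdiffs_strong_converges_everywhere[OF ss_summable])

lemma Cos_0[simp]: "Cos 0 = 1"
  unfolding Cos_eq powser_zero by (simp add: cc_def)
lemma Sin_0[simp]: "Sin 0 = 1"
  unfolding Sin_eq powser_zero by (simp add: ss_def)
lemma Sind_0: "Sind 0 = - 1/6"
proof -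
  have "(fact 3 :: complex) = 6" by (simp add: numeral_3_eq_3)
  then show ?thesis unfolding Sind_def powser_zero by (simp add: diffs_def ss_def)
qed

lemma Sind_rel: "2 * z * Sind z = Cos z - Sin z"
proof -
  define f where "f m = of_nat m * ss m * z^m" for m
  have "(\<lambda>n. diffs ss n * z^n) sums Sind z"
    unfolding Sind_def by (rule summable_sums[OF termdiff_converges_all[OF ss_summable]])
  then have "(\<lambda>n. z * (diffs ss n * z^n)) sums (z * Sind z)" by (rule sums_mult)
  moreover have "z * (diffs ss n * z^n) = f (Suc n)" for n
    unfolding f_def diffs_def by (simp add: algebra_simps)
  ultimately have "(\<lambda>n. f (Suc n)) sums (z * Sind z)" by simp
  then have "f sums (z * Sind z + f 0)" by (simp only: sums_Suc_iff)
  then have "f sums (z * Sind z)" by (simp add: f_def)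
  then have "(\<lambda>n. 2 * f n) sums (2 * (z * Sind z))" by (rule sums_mult)
  moreover have "2 * f n = cc n * z^n - ss n * z^n" for n
    unfolding f_def using cc_ss_rel[of n] by (simp add: algebra_simps)
  ultimately have "(\<lambda>n. cc n * z^n - ss n * z^n) sums (2 * (z * Sind z))" by simp
  moreover have "(\<lambda>n. cc n * z^n - ss n * z^n) sums (Cos z - Sin z)"
    by (rule sums_diff[OF Cos_sums Sin_sums])
  ultimately show ?thesis using sums_unique2 by (metis mult.assoc)
qed
lemma Cos_cos: "Cos (w^2) = cos w"
proof -
  have "(\<lambda>n. cos_coeff n *\<^sub>R w^n) sums cos w" by (rule cos_converges)
  moreover have "strict_mono (\<lambda>n::nat. 2*n)" by (rule strict_monoI) simp
  moreover have "\<And>n. n \<notin> range (\<lambda>n::nat. 2*n) \<Longrightarrow> cos_coeff n *\<^sub>R w^n = 0"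
    by (auto simp: cos_coeff_def elim!: evenE)
  ultimately have "(\<lambda>n. cos_coeff (2*n) *\<^sub>R w^(2*n)) sums cos w"
    using sums_mono_reindex[of "\<lambda>n::nat. 2*n" "\<lambda>n. cos_coeff n *\<^sub>R w^n"] by simp
  moreover have "cos_coeff (2*n) *\<^sub>R w^(2*n) = cc n * (w^2)^n" for n
    by (simp add: cos_coeff_def cc_def scaleR_conv_of_real power_mult)
  ultimately have "(\<lambda>n. cc n * (w^2)^n) sums cos w" by simp
  then show ?thesis using Cos_sums sums_unique2 by blast
qed

lemma Sin_sin: "w * Sin (w^2) = sin w"
proof -
  have "(\<lambda>n. sin_coeff n *\<^sub>R w^n) sums sin w" by (rule sin_converges)
  moreover have "strict_mono (\<lambda>n::nat. 2*n+1)" by (rule strict_monoI) simp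
  moreover have "\<And>n. n \<notin> range (\<lambda>n::nat. 2*n+1) \<Longrightarrow> sin_coeff n *\<^sub>R w^n = 0"
    by (auto simp: sin_coeff_def elim!: oddE)
  ultimately have "(\<lambda>n. sin_coeff (2*n+1) *\<^sub>R w^(2*n+1)) sums sin w"
    using sums_mono_reindex[of "\<lambda>n::nat. 2*n+1" "\<lambda>n. sin_coeff n *\<^sub>R w^n"] by simp
  moreover have "sin_coeff (2*n+1) *\<^sub>R w^(2*n+1) = w * (ss n * (w^2)^n)" for n
  proof -
    have p: "(w^n)^2 = (w^2)^n" by (metis power_mult mult.commute)
    show ?thesis by (simp add: sin_coeff_def ss_def scaleR_conv_of_real power_mult algebra_simps p)
  qed
  ultimately have "(\<lambda>n. w * (ss n * (w^2)^n)) sums sin w" by simp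
  moreover have "(\<lambda>n. w * (ss n * (w^2)^n)) sums (w * Sin (w^2))" by (rule sums_mult[OF Sin_sums])
  ultimately show ?thesis using sums_unique2 by blast
qed

lemma Cos_Sin_id: "Cos z ^ 2 + z * Sin z ^ 2 = 1"
proof -
  obtain w where w: "z = w^2" by (metis power2_csqrt)
  have "Cos z ^ 2 + z * Sin z ^ 2 = cos w ^ 2 + (w * Sin (w^2))^2"
    unfolding w Cos_cos by (simp add: power_mult_distrib)
  also have "\<dots> = 1" unfolding Sin_sin by (rule sin_cos_squared_add2)
  finally show ?thesis .
qed

lemma Sin_zero: "Sin z = 0 \<Longrightarrow> \<exists>n::int. n \<noteq> 0 \<and> z = (of_int n * pi)^2"
proof -
  assume S: "Sin z = 0"
  obtain w where w: "z = w^2" by (metis power2_csqrt)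
  have "z \<noteq> 0" using S by auto
  have "sin w = 0" using S Sin_sin[of w] w by simp
  then obtain n :: int where n: "w = of_real (n * pi)" by (auto simp: sin_eq_0)
  have "n \<noteq> 0" using \<open>z \<noteq> 0\<close> w n by auto
  then show ?thesis using w n by (intro exI[of _ n]) simp
qed

lemma Cos_cosh: "Cos (- (r^2)) = (exp r + exp (-r)) / 2"
proof -
  have "- (r^2) = (\<i>*r)^2" by (simp add: power_mult_distrib)
  then show ?thesis by (simp add: Cos_cos cos_exp_eq add.commute)
qed

lemma Sin_sinh: "2 * r * Sin (- (r^2)) = exp r - exp (-r)"
proof -
  have e: "- (r^2) = (\<i>*r)^2" by (simp add: power_mult_distrib)
  have "2 * r * Sin (- (r^2)) = - 2 * \<i> * ((\<i>*r) * Sin ((\<i>*r)^2))" unfolding e by (simp add: algebra_simps)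
  also have "\<dots> = - 2 * \<i> * sin (\<i>*r)" by (simp only: Sin_sin)
  also have "\<dots> = exp r - exp (-r)" by (simp add: sin_exp_eq field_simps)
  finally show ?thesis .
qed



lemma csmul_nth[simp]: "csmul c M $ i $ j = c * M $ i $ j"
  by (simp add: csmul_def)

lemma cmat_eq: "(X::cmat2) = Y \<longleftrightarrow> X$1$1 = Y$1$1 \<and> X$1$2 = Y$1$2 \<and> X$2$1 = Y$2$1 \<and> X$2$2 = Y$2$2"
  by (auto simp: vec_eq_iff forall_2)

lemma mult_nth[simp]: "((X::cmat2) ** Y) $ i $ j = X$i$1 * Y$1$j + X$i$2 * Y$2$j"
  by (simp add: matrix_matrix_mult_def sum_2)

lemma mat_nth[simp]: "(mat z :: cmat2) $ i $ j = (if i = j then z else 0)"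
  by (simp add: mat_def)

lemma trace2: "trace (X::cmat2) = X$1$1 + X$2$2"
  by (simp add: trace_def sum_2)

lemmas ent = cmat_eq trace2 det_2 comm_def DA_def

definition tau :: "cmat2 \<Rightarrow> complex" where "tau X = trace X / 2"
definition nn :: "cmat2 \<Rightarrow> cmat2" where "nn X = X - mat (tau X)"

lemma DA_nn: "DA X = det (nn X)"
  by (simp add: ent nn_def tau_def power2_eq_square field_simps)

lemma nn_sq: "nn X ** nn X = mat (- DA X)"
  by (simp add: ent nn_def tau_def power2_eq_square field_simps)


lemma step_mult: "X ** (csmul p (mat 1) + csmul s (nn X)) =
   csmul (tau X * p - DA X * s) (mat 1) + csmul (p + tau X * s) (nn X)"
  by (simp add: ent nn_def tau_def power2_eq_square field_simps)

fun Rr :: "complex \<Rightarrow> complex \<Rightarrow> nat \<Rightarrow> complex" where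
  "Rr a b 0 = 0"
| "Rr a b (Suc n) = a * Rr a b n + b^n"

lemma Rr_alt: "Rr a b (Suc n) = b * Rr a b n + a^n"
proof (induction n)
  case 0 then show ?case by simp
next
  case (Suc n)
  have "Rr a b (Suc (Suc n)) = a * (b * Rr a b n + a^n) + b^Suc n" using Suc.IH by simp
  also have "\<dots> = b*(a*Rr a b n + b^n) + a^Suc n" by (simp add: algebra_simps)
  also have "\<dots> = b * Rr a b (Suc n) + a^Suc n" by simp
  finally show ?case .
qed

lemma Rr_diff: "(a - b) * Rr a b n = a^n - b^n"
proof (induction n)
  case 0 then show ?case by simp
next
  case (Suc n)
  have "(a - b) * Rr a b (Suc n) = a * ((a - b) * Rr a b n) + (a - b) * b^n" by (simp add: algebra_simps)
  also have "\<dots> = a * (a^n - b^n) + (a - b) * b^n" by (simp only: Suc.IH)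
  also have "\<dots> = a^Suc n - b^Suc n" by (simp add: algebra_simps)
  finally show ?case .
qed

lemma Rr_same: "Rr a a (Suc n) = of_nat (Suc n) * a^n"
  by (induction n) (simp_all add: algebra_simps)

lemma mpow_formula:
  assumes r: "r^2 = - DA X"
  shows "mpow X n = csmul (((tau X + r)^n + (tau X - r)^n)/2) (mat 1) + csmul (Rr (tau X + r) (tau X - r) n) (nn X)"
proof (induction n)
  case 0
  show ?case by (simp add: cmat_eq)
next
  case (Suc n)
  let ?a = "tau X + r" and ?b = "tau X - r"
  have e1: "tau X * ((?a^n + ?b^n)/2) - DA X * Rr ?a ?b n = (?a^Suc n + ?b^Suc n)/2"
  proof -
    have "- DA X * Rr ?a ?b n = r^2 * Rr ?a ?b n" using r by simp
    also have "\<dots> = r/2 * ((?a - ?b) * Rr ?a ?b n)" by (simp add: power2_eq_square algebra_simps)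
    also have "\<dots> = r/2 * (?a^n - ?b^n)" by (simp only: Rr_diff)
    finally show ?thesis by (simp add: algebra_simps)
  qed
  have e2: "(?a^n + ?b^n)/2 + tau X * Rr ?a ?b n = Rr ?a ?b (Suc n)"
  proof -
    have "Rr ?a ?b (Suc n) = ((?a * Rr ?a ?b n + ?b^n) + (?b * Rr ?a ?b n + ?a^n))/2"
      using Rr_alt[of ?a ?b n] by simp
    then show ?thesis by (simp add: algebra_simps)
  qed
  show ?case by (simp only: mpow.simps Suc.IH step_mult e1 e2)
qed

lemma linear_csmul: "bounded_linear (\<lambda>c::complex. csmul c M)"
  unfolding linear_conv_bounded_linear[symmetric]
  by (rule linearI) (simp_all add: cmat_eq algebra_simps)

lemma sums_csmul2:
  assumes "f sums p" "g sums s"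
  shows "(\<lambda>n. csmul (f n) M + csmul (g n) K) sums (csmul p M + csmul s K)"
  by (rule sums_add[OF bounded_linear.sums[OF linear_csmul assms(1)] bounded_linear.sums[OF linear_csmul assms(2)]])

lemma exp_sums_c: "(\<lambda>n. a^n / of_real (fact n)) sums exp (a::complex)"
  using exp_converges[of a] by (simp add: scaleR_conv_of_real divide_inverse mult.commute)

definition mexpf :: "cmat2 \<Rightarrow> cmat2" where
  "mexpf X = csmul (exp (tau X)) (csmul (Cos (DA X)) (mat 1) + csmul (Sin (DA X)) (nn X))"

lemma mexp_formula: "mexp X = mexpf X"
proof -
  obtain r where r: "r^2 = - DA X" by (metis power2_csqrt)
  let ?a = "tau X + r" and ?b = "tau X - r"
  have P0: "(\<lambda>n. (?a^n / of_real (fact n) + ?b^n / of_real (fact n))/2) sums ((exp ?a + exp ?b)/2)"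
    by (rule sums_divide[OF sums_add[OF exp_sums_c[of ?a] exp_sums_c[of ?b]]])
  have "(\<lambda>n. (?a^n / of_real (fact n) + ?b^n / of_real (fact n))/2) = (\<lambda>n. ((?a^n + ?b^n)/2) / of_real (fact n))"
    by (rule ext) (simp add: field_simps)
  with P0 have P: "(\<lambda>n. ((?a^n + ?b^n)/2) / of_real (fact n)) sums ((exp ?a + exp ?b)/2)" by simp
  have Pv: "(exp ?a + exp ?b)/2 = exp (tau X) * Cos (DA X)"
  proof -
    have "DA X = - (r^2)" using r by simp
    then show ?thesis by (simp add: Cos_cosh exp_add exp_diff field_simps exp_minus_inverse)
  qed
  have R: "(\<lambda>n. Rr ?a ?b n / of_real (fact n)) sums (exp (tau X) * Sin (DA X))"
  proof (cases "r = 0")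
    case True
    then have D: "DA X = 0" using r by simp
    have "(\<lambda>n. Rr (tau X) (tau X) (Suc n) / of_real (fact (Suc n))) sums exp (tau X)"
    proof -
      have "Rr (tau X) (tau X) (Suc n) / of_real (fact (Suc n)) = (tau X)^n / of_real (fact n)" for n
        unfolding Rr_same by (simp add: field_simps del: Rr.simps of_nat_Suc)
      then show ?thesis using exp_sums_c by simp
    qed
    then have "(\<lambda>n. Rr (tau X) (tau X) n / of_real (fact n)) sums (exp (tau X) + 0)"
      using sums_Suc_iff[of "\<lambda>n. Rr (tau X) (tau X) n / of_real (fact n)" "exp (tau X)"] by simp
    then show ?thesis using True D by simp
  next
    case False
    have "Rr ?a ?b n / of_real (fact n) = (?a^n / of_real (fact n) - ?b^n / of_real (fact n)) / (2*r)" for n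
    proof -
      have "(2*r) * Rr ?a ?b n = ?a^n - ?b^n" using Rr_diff[of ?a ?b n] by simp
      then show ?thesis using False by (simp add: field_simps)
    qed
    moreover have "(\<lambda>n. (?a^n / of_real (fact n) - ?b^n / of_real (fact n)) / (2*r)) sums ((exp ?a - exp ?b)/(2*r))"
      by (rule sums_divide[OF sums_diff[OF exp_sums_c exp_sums_c]])
    moreover have "(exp ?a - exp ?b)/(2*r) = exp (tau X) * Sin (DA X)"
    proof -
      have "DA X = - (r^2)" using r by simp
      then have "2 * r * Sin (DA X) = exp r - exp (-r)" by (simp add: Sin_sinh)
      moreover have "exp ?a - exp ?b = exp (tau X) * (exp r - exp (-r))"
        by (simp add: exp_add[symmetric] algebra_simps)
      ultimately have "exp ?a - exp ?b = exp (tau X) * (2 * r * Sin (DA X))" by simp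
      then show ?thesis using False by (simp add: field_simps)
    qed
    ultimately show ?thesis by simp
  qed
  have "(\<lambda>n. csmul (((?a^n + ?b^n)/2) / of_real (fact n)) (mat 1) + csmul (Rr ?a ?b n / of_real (fact n)) (nn X))
     sums (csmul ((exp ?a + exp ?b)/2) (mat 1) + csmul (exp (tau X) * Sin (DA X)) (nn X))"
    by (rule sums_csmul2[OF P R])
  moreover have "(1 / fact n) *\<^sub>R mpow X n = csmul (((?a^n + ?b^n)/2) / of_real (fact n)) (mat 1) + csmul (Rr ?a ?b n / of_real (fact n)) (nn X)" for n
    unfolding mpow_formula[OF r] by (simp add: cmat_eq) (simp add: scaleR_conv_of_real field_simps)
  ultimately have "(\<lambda>n. (1 / fact n) *\<^sub>R mpow X n) sums (csmul ((exp ?a + exp ?b)/2) (mat 1) + csmul (exp (tau X) * Sin (DA X)) (nn X))"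
    by simp
  then have "mexp X = csmul ((exp ?a + exp ?b)/2) (mat 1) + csmul (exp (tau X) * Sin (DA X)) (nn X)"
    unfolding mexp_def by (rule sums_unique[symmetric])
  also have "\<dots> = mexpf X" unfolding Pv mexpf_def by (simp add: cmat_eq algebra_simps)
  finally show ?thesis .
qed




definition strip :: "cmat2 \<Rightarrow> bool" where "strip X \<longleftrightarrow> (\<forall>z\<in>spec X. \<bar>Im z\<bar> < pi)"

lemma char_poly: "det (X - mat z) = (z - tau X)^2 + DA X"
  by (simp add: ent tau_def power2_eq_square field_simps)

lemma spec_iff: "z \<in> spec X \<longleftrightarrow> (z - tau X)^2 = - DA X"
  unfolding spec_def using char_poly[of X z] by (auto simp: add_eq_0_iff)

lemma strip_roots:
  assumes "strip X" "r^2 = - DA X"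
  shows "\<bar>Im (tau X + r)\<bar> < pi" "\<bar>Im (tau X - r)\<bar> < pi"
proof -
  have "tau X + r \<in> spec X" "tau X - r \<in> spec X" using assms(2) by (simp_all add: spec_iff)
  then show "\<bar>Im (tau X + r)\<bar> < pi" "\<bar>Im (tau X - r)\<bar> < pi" using assms(1) by (auto simp: strip_def)
qed

lemma strip_Sin_nz:
  assumes "strip X"
  shows "Sin (DA X) \<noteq> 0"
proof
  assume "Sin (DA X) = 0"
  then obtain n :: int where n: "n \<noteq> 0" "DA X = (of_int n * pi)^2" using Sin_zero by blast
  obtain r where r: "r^2 = - DA X" by (metis power2_csqrt)
  have "(r - \<i> * (of_int n * pi)) * (r + \<i> * (of_int n * pi)) = 0"
    using r n by (simp add: algebra_simps power2_eq_square)
  then have "r = \<i> * (of_int n * pi) \<or> r = - (\<i> * (of_int n * pi))"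
    by (auto simp: add_eq_0_iff)
  then have "\<bar>Im r\<bar> = \<bar>of_int n\<bar> * pi" by (auto simp: abs_mult)
  moreover have "\<bar>of_int n\<bar> * pi \<ge> pi" using n by (simp add: mult_le_cancel_right1 del: of_int_abs)
  moreover have "\<bar>Im (tau X + r)\<bar> < pi" "\<bar>Im (tau X - r)\<bar> < pi" using strip_roots[OF assms r] by auto
  then have "\<bar>Im r\<bar> < pi" by (simp only: abs_less_iff plus_complex.sel minus_complex.sel) linarith
  ultimately show False by simp
qed

lemma exp_inj_strip:
  assumes "exp a = exp b" "\<bar>Im a\<bar> < pi" "\<bar>Im b\<bar> < pi"
  shows "a = b"
proof -
  obtain n :: int where n: "a = b + (of_int (2 * n) * pi) * \<i>" using assms(1) exp_eq by blast
  then have "Im a = Im b + 2 * of_int n * pi" by simp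
  then have "\<bar>2 * of_int n * pi\<bar> < 2 * pi" using assms(2,3) by linarith
  then have "\<bar>of_int n\<bar> < (1::real)" by (simp add: abs_mult)
  then have "n = 0" by linarith
  then show ?thesis using n by simp
qed

lemma nn_trace: "trace (nn X) = 0"
  by (simp add: nn_def tau_def trace2)

lemma tr0: "trace (N::cmat2) = 0 \<Longrightarrow> N$2$2 = - N$1$1"
  by (simp add: trace2 add_eq_0_iff)

lemma trace_gen: "trace N = 0 \<Longrightarrow> trace (csmul e (csmul c (mat 1) + csmul s N)) = 2 * e * c"
  by (simp add: trace2 tr0 algebra_simps)

lemma det_gen: "trace N = 0 \<Longrightarrow> det (csmul e (csmul c (mat 1) + csmul s N)) = e^2 * (c^2 + det N * s^2)"
  by (simp add: trace2 det_2 power2_eq_square algebra_simps add_eq_0_iff)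

lemma trace_mexpf: "r^2 = - DA X \<Longrightarrow> trace (mexpf X) = exp (tau X + r) + exp (tau X - r)"
proof -
  assume r: "r^2 = - DA X"
  then have "DA X = - (r^2)" by simp
  then have "trace (mexpf X) = 2 * exp (tau X) * ((exp r + exp (-r))/2)"
    unfolding mexpf_def trace_gen[OF nn_trace] by (simp add: Cos_cosh)
  also have "\<dots> = exp (tau X + r) + exp (tau X - r)" by (simp add: exp_add[symmetric] algebra_simps)
  finally show ?thesis .
qed

lemma det_mexpf: "det (mexpf X) = exp (tau X + r) * exp (tau X - r)"
proof -
  have "det (mexpf X) = exp (tau X)^2 * (Cos (DA X)^2 + DA X * Sin (DA X)^2)"
    unfolding mexpf_def det_gen[OF nn_trace] DA_nn ..
  also have "\<dots> = exp (tau X)^2" by (simp add: Cos_Sin_id)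
  also have "\<dots> = exp (tau X + r) * exp (tau X - r)" by (simp add: exp_add[symmetric] power2_eq_square)
  finally show ?thesis .
qed

lemma cancel_gen: "e \<noteq> 0 \<Longrightarrow> s \<noteq> 0 \<Longrightarrow> csmul e (csmul c (mat 1) + csmul s N) = csmul e (csmul c (mat 1) + csmul s K) \<Longrightarrow> N = K"
  by (simp add: cmat_eq)

lemma nn_recon: "X = nn X + mat (tau X)"
  by (simp add: nn_def)

lemma quad_pairs:
  fixes x y u w :: complex
  assumes "x + y = u + w" "x * y = u * w"
  shows "(x = u \<and> y = w) \<or> (x = w \<and> y = u)"
proof -
  have y: "y = u + w - x" by (metis assms(1) add_diff_cancel_left')
  have "(x - u) * (x - w) = 0" using assms(2) unfolding y by (simp add: algebra_simps)
  then have "x = u \<or> x = w" by simp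
  then show ?thesis using y by auto
qed

lemma lin1: "(a::complex) + r = b + s \<Longrightarrow> a - r = b - s \<Longrightarrow> a = b \<and> (r = s \<or> r = - s)"
proof -
  assume h1: "a + r = b + s" and h2: "a - r = b - s"
  have "(a + r) + (a - r) = (b + s) + (b - s)" using h1 h2 by simp
  then have "a = b" by simp
  then show ?thesis using h1 by simp
qed

lemma lin2: "(a::complex) + r = b - s \<Longrightarrow> a - r = b + s \<Longrightarrow> a = b \<and> (r = s \<or> r = - s)"
proof -
  assume h1: "a + r = b - s" and h2: "a - r = b + s"
  have "(a + r) + (a - r) = (b - s) + (b + s)" using h1 h2 by simp
  then have "a = b" by simp
  then show ?thesis using h1 by (simp add: eq_neg_iff_add_eq_0)
qed

lemma mexpf_inj:
  assumes X: "strip X" and Y: "strip Y" and eq: "mexpf X = mexpf Y"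
  shows "X = Y"
proof -
  obtain rX where rX: "rX^2 = - DA X" by (metis power2_csqrt)
  obtain rY where rY: "rY^2 = - DA Y" by (metis power2_csqrt)
  note sX = strip_roots[OF X rX] and sY = strip_roots[OF Y rY]
  have t: "exp (tau X + rX) + exp (tau X - rX) = exp (tau Y + rY) + exp (tau Y - rY)"
    using trace_mexpf[OF rX] trace_mexpf[OF rY] eq by simp
  have d: "exp (tau X + rX) * exp (tau X - rX) = exp (tau Y + rY) * exp (tau Y - rY)"
    using det_mexpf[of X rX] det_mexpf[of Y rY] eq by simp
  from quad_pairs[OF t d] have "tau X = tau Y \<and> (rX = rY \<or> rX = - rY)"
  proof
    assume "exp (tau X + rX) = exp (tau Y + rY) \<and> exp (tau X - rX) = exp (tau Y - rY)"
    then have "tau X + rX = tau Y + rY" "tau X - rX = tau Y - rY"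
      using exp_inj_strip sX sY by blast+
    then show ?thesis by (rule lin1)
  next
    assume "exp (tau X + rX) = exp (tau Y - rY) \<and> exp (tau X - rX) = exp (tau Y + rY)"
    then have "tau X + rX = tau Y - rY" "tau X - rX = tau Y + rY"
      using exp_inj_strip sX sY by blast+
    then show ?thesis by (rule lin2)
  qed
  then have tt: "tau X = tau Y" and "rX^2 = rY^2" by auto
  then have D: "DA X = DA Y" using rX rY by simp
  have "nn X = nn Y"
    using eq unfolding mexpf_def tt D
    by (rule cancel_gen[OF exp_not_eq_zero strip_Sin_nz[OF Y]])
  then show ?thesis using nn_recon[of X] nn_recon[of Y] tt by simp
qed

lemma mlog_mexp: "strip X \<Longrightarrow> mlog (mexp X) = X"
  unfolding mlog_def
proof (rule the_equality)
  assume "strip X"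
  then show "mexp X = mexp X \<and> (\<forall>z\<in>spec X. \<bar>Im z\<bar> < pi)" by (simp add: strip_def)
next
  fix Y assume "strip X" "mexp Y = mexp X \<and> (\<forall>z\<in>spec Y. \<bar>Im z\<bar> < pi)"
  then show "Y = X" using mexpf_inj[of Y X] by (simp add: strip_def mexp_formula)
qed




lemma cont_entry[continuous_intros]: "continuous_on S (\<lambda>X::cmat2. X$i$j)"
proof -
  have "bounded_linear (\<lambda>X::cmat2. X$i$j)"
    by (rule bounded_linear_compose[of "\<lambda>v::complex^2. v$j" "\<lambda>X::cmat2. X$i"]) (rule bounded_linear_vec_nth)+
  then show ?thesis by (rule linear_continuous_on)
qed

lemma cont_trace[continuous_intros]: "continuous_on S (\<lambda>X::cmat2. trace X)"
  unfolding trace2 by (intro continuous_intros)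

lemma cont_det[continuous_intros]: "continuous_on S (\<lambda>X::cmat2. det X)"
  unfolding det_2 by (intro continuous_intros)

lemma char_poly2: "det ((X::cmat2) - mat z) = z^2 - trace X * z + det X"
  unfolding det_2 by (simp add: det_2 trace2 power2_eq_square algebra_simps)

lemma root_bound:
  assumes "z^2 - t * z + d = (0::complex)"
  shows "norm z \<le> 1 + norm t + norm d"
proof (cases "norm z \<le> 1")
  case True then show ?thesis by (smt (verit) norm_ge_zero)
next
  case False
  have e: "z*z - t*z + d = 0" using assms by (simp add: power2_eq_square)
  have "z*z = (z*z - t*z + d) + t*z - d" by simp
  then have "z * z = t * z - d" by (simp only: e) simp
  then have "norm z * norm z = norm (t * z - d)" by (metis norm_mult)
  also have "\<dots> \<le> norm t * norm z + norm d" by (metis norm_triangle_ineq4 norm_mult)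
  also have "\<dots> \<le> norm t * norm z + norm d * norm z" using False by (simp add: mult_le_cancel_left1)
  finally have "norm z * norm z \<le> (norm t + norm d) * norm z" by (simp add: algebra_simps)
  then have "norm z \<le> norm t + norm d" using False mult_right_le_imp_le[of "norm z" "norm z" "norm t + norm d"] by force
  then show ?thesis by simp
qed

lemma prod_small:
  fixes a b :: complex
  assumes "norm (a * b) < e^2" "e > 0"
  shows "norm a < e \<or> norm b < e"
proof (rule ccontr)
  assume "\<not> (norm a < e \<or> norm b < e)"
  then have "e * e \<le> norm a * norm b" using assms(2) by (intro mult_mono) auto
  then show False using assms by (simp add: norm_mult power2_eq_square)
qed

lemma strip_nhd:
  assumes A: "strip A"
  obtains S where "open S" "A \<in> S" "\<And>X. X \<in> S \<Longrightarrow> strip X"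
proof -
  obtain r where r: "r^2 = - DA A" by (metis power2_csqrt)
  define l1 where "l1 = tau A + r"
  define l2 where "l2 = tau A - r"
  have s1: "\<bar>Im l1\<bar> < pi" and s2: "\<bar>Im l2\<bar> < pi" using strip_roots[OF A r] by (auto simp: l1_def l2_def)
  define \<delta> where "\<delta> = pi - max \<bar>Im l1\<bar> \<bar>Im l2\<bar>"
  have dpos: "\<delta> > 0" using s1 s2 by (simp add: \<delta>_def)
  define K where "K = 4 + norm (trace A) + norm (det A)"
  have Kpos: "K > 0" by (simp add: K_def add_pos_nonneg)
  define \<eta> where "\<eta> = min 1 (\<delta>^2 / (2*K))"
  have epos: "\<eta> > 0" using dpos Kpos by (simp add: \<eta>_def)
  have factor: "(z - l1) * (z - l2) = z^2 - trace A * z + det A" for z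
  proof -
    have "l1 + l2 = trace A" by (simp add: l1_def l2_def tau_def)
    moreover have "l1 * l2 = det A"
    proof -
      have "l1 * l2 = tau A ^2 - r^2" by (simp add: l1_def l2_def power2_eq_square algebra_simps)
      also have "\<dots> = det A" using r by (simp add: DA_def tau_def power2_eq_square field_simps)
      finally show ?thesis .
    qed
    moreover have "(z - l1) * (z - l2) = z^2 - (l1 + l2) * z + l1 * l2" by (simp add: power2_eq_square algebra_simps)
    ultimately show ?thesis by simp
  qed
  define S :: "cmat2 set" where "S = {X. norm (trace X - trace A) < \<eta>} \<inter> {X. norm (det X - det A) < \<eta>}"
  have ct: "continuous_on UNIV (trace :: cmat2 \<Rightarrow> complex)" by (rule cont_trace)
  have cd: "continuous_on UNIV (det :: cmat2 \<Rightarrow> complex)" by (rule cont_det)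
  have "open S" unfolding S_def using ct cd
    by (intro open_Int open_Collect_less continuous_intros)
  moreover have "A \<in> S" using epos by (simp add: S_def)
  moreover have "strip X" if X: "X \<in> S" for X
    unfolding strip_def
  proof
    fix z assume "z \<in> spec X"
    then have z: "z^2 - trace X * z + det X = 0" by (simp add: spec_def char_poly2)
    have n1: "norm (trace X - trace A) < \<eta>" and n2: "norm (det X - det A) < \<eta>" using X by (auto simp: S_def)
    have "norm z \<le> 1 + norm (trace X) + norm (det X)" by (rule root_bound[OF z])
    also have "\<dots> \<le> 1 + (norm (trace A) + \<eta>) + (norm (det A) + \<eta>)"
      using n1 n2 norm_triangle_sub[of "trace X" "trace A"] norm_triangle_sub[of "det X" "det A"] by simp
    also have "\<dots> \<le> K - 1" using epos by (simp add: K_def \<eta>_def)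
    finally have zb: "norm z \<le> K - 1" .
    have "(z - l1) * (z - l2) = (trace X - trace A) * z - (det X - det A)"
      unfolding factor using z by (simp add: algebra_simps eq_diff_eq)
    then have "norm ((z - l1) * (z - l2)) \<le> norm (trace X - trace A) * norm z + norm (det X - det A)"
      by (metis norm_triangle_ineq4 norm_mult)
    also have "\<dots> \<le> \<eta> * norm z + \<eta>"
      using n1 n2 by (intro add_mono mult_right_mono) auto
    also have "\<dots> = \<eta> * (norm z + 1)" by (simp add: algebra_simps)
    also have "\<dots> \<le> \<eta> * K" using zb epos by (intro mult_left_mono) auto
    also have "\<dots> \<le> \<delta>^2 / 2" using Kpos by (simp add: \<eta>_def min_def field_simps)
    also have "\<dots> < \<delta>^2" using dpos by simp
    finally have "norm (z - l1) < \<delta> \<or> norm (z - l2) < \<delta>" by (rule prod_small[OF _ dpos])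
    moreover have "\<bar>Im w\<bar> \<le> norm w" for w by (rule abs_Im_le_cmod)
    moreover have "\<bar>Im z\<bar> \<le> \<bar>Im (z - l1)\<bar> + \<bar>Im l1\<bar>" "\<bar>Im z\<bar> \<le> \<bar>Im (z - l2)\<bar> + \<bar>Im l2\<bar>" by auto
    moreover have "\<bar>Im l1\<bar> \<le> pi - \<delta>" "\<bar>Im l2\<bar> \<le> pi - \<delta>" by (auto simp: \<delta>_def)
    ultimately show "\<bar>Im z\<bar> < pi"
      using abs_Im_le_cmod[of "z - l1"] abs_Im_le_cmod[of "z - l2"] by linarith
  qed
  ultimately show ?thesis using that by blast
qed




lemma bb_csmul: "bounded_bilinear csmul"
  unfolding bilinear_conv_bounded_bilinear[symmetric] bilinear_def
  by (auto intro!: linearI simp: cmat_eq algebra_simps)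

lemma cderiv_comp:
  assumes "(f has_field_derivative D) (at (g x))" "(g has_derivative g') (at x)"
  shows "((\<lambda>x. f (g x)) has_derivative (\<lambda>h. D * g' h)) (at x)"
  using has_derivative_compose[of g g' x UNIV f "(*) D"] assms by (simp add: has_field_derivative_def)

lemma csmul_deriv:
  assumes "(f has_derivative f') (at x)" "(g has_derivative g') (at x)"
  shows "((\<lambda>x. csmul (f x) (g x)) has_derivative (\<lambda>h. csmul (f x) (g' h) + csmul (f' h) (g x))) (at x)"
  by (rule bounded_bilinear.FDERIV[OF bb_csmul assms])

lemma lin_tau: "bounded_linear tau"
  unfolding linear_conv_bounded_linear[symmetric]
  by (rule linearI) (simp_all add: tau_def trace2, simp_all add: scaleR_conv_of_real field_simps)

lemma lin_nn: "bounded_linear nn"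
  unfolding linear_conv_bounded_linear[symmetric]
  by (rule linearI) (simp_all add: nn_def tau_def trace2 cmat_eq, simp_all add: scaleR_conv_of_real field_simps)

definition dDA :: "cmat2 \<Rightarrow> cmat2 \<Rightarrow> complex" where
  "dDA X W = (X$1$1 * W$2$2 + W$1$1 * X$2$2 - X$1$2 * W$2$1 - W$1$2 * X$2$1) - trace X * trace W / 2"

lemma ent_deriv[derivative_intros]: "((\<lambda>X::cmat2. X$i$j) has_derivative (\<lambda>W. W$i$j)) F"
proof -
  have b: "bounded_linear (\<lambda>X::cmat2. X$i$j)"
    by (rule bounded_linear_compose[of "\<lambda>v::complex^2. v$j" "\<lambda>X::cmat2. X$i"]) (rule bounded_linear_vec_nth)+
  then show ?thesis by (rule bounded_linear_imp_has_derivative)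
qed

lemma DA_deriv: "(DA has_derivative dDA X) (at X)"
proof -
  have e: "DA = (\<lambda>X. X$1$1 * X$2$2 - X$1$2 * X$2$1 - (1/4) * ((X$1$1 + X$2$2) * (X$1$1 + X$2$2)))"
    by (rule ext) (simp add: DA_def det_2 trace2 power2_eq_square)
  show ?thesis unfolding e
    apply (rule has_derivative_eq_rhs)
     apply (rule has_derivative_diff has_derivative_mult has_derivative_add ent_deriv has_derivative_const)+
    apply (rule ext)
    apply (simp add: dDA_def trace2 power2_eq_square field_simps)
    done
qed

definition mexpd :: "cmat2 \<Rightarrow> cmat2 \<Rightarrow> cmat2" where
  "mexpd X W = csmul (exp (tau X)) (csmul (Sin (DA X)) (nn W) + csmul (dDA X W * Sind (DA X)) (nn X)
      + csmul (- Sin (DA X) / 2 * dDA X W) (mat 1))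
    + csmul (exp (tau X) * tau W) (csmul (Cos (DA X)) (mat 1) + csmul (Sin (DA X)) (nn X))"

lemma mexpf_deriv: "(mexpf has_derivative mexpd X) (at X)"
proof -
  have t: "(tau has_derivative tau) (at X)" by (rule bounded_linear.has_derivative[OF lin_tau]) (rule has_derivative_ident)
  have n: "(nn has_derivative nn) (at X)" by (rule bounded_linear.has_derivative[OF lin_nn]) (rule has_derivative_ident)
  have e: "((\<lambda>X. exp (tau X)) has_derivative (\<lambda>h. exp (tau X) * tau h)) (at X)"
    by (rule cderiv_comp[OF DERIV_exp t])
  have c: "((\<lambda>X. Cos (DA X)) has_derivative (\<lambda>h. (- Sin (DA X) / 2) * dDA X h)) (at X)"
    by (rule cderiv_comp[OF Cos_deriv DA_deriv])
  have s: "((\<lambda>X. Sin (DA X)) has_derivative (\<lambda>h. Sind (DA X) * dDA X h)) (at X)"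
    by (rule cderiv_comp[OF Sin_deriv DA_deriv])
  have k: "((\<lambda>X. mat 1 :: cmat2) has_derivative (\<lambda>h. 0)) (at X)" by (rule has_derivative_const)
  have inner: "((\<lambda>X. csmul (Cos (DA X)) (mat 1) + csmul (Sin (DA X)) (nn X)) has_derivative
     (\<lambda>h. (csmul (Cos (DA X)) 0 + csmul (- Sin (DA X) / 2 * dDA X h) (mat 1)) +
          (csmul (Sin (DA X)) (nn h) + csmul (Sind (DA X) * dDA X h) (nn X)))) (at X)"
    by (intro has_derivative_add csmul_deriv c s k n)
  have "(mexpf has_derivative (\<lambda>h. csmul (exp (tau X)) ((csmul (Cos (DA X)) 0 + csmul (- Sin (DA X) / 2 * dDA X h) (mat 1)) +
          (csmul (Sin (DA X)) (nn h) + csmul (Sind (DA X) * dDA X h) (nn X)))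
       + csmul (exp (tau X) * tau h) (csmul (Cos (DA X)) (mat 1) + csmul (Sin (DA X)) (nn X)))) (at X)"
    unfolding mexpf_def[abs_def] by (rule csmul_deriv[OF e inner])
  then show ?thesis
    by (rule has_derivative_eq_rhs) (rule ext, simp add: mexpd_def cmat_eq algebra_simps)
qed




definition mexpdG where
  "mexpdG E C S Sd D X W = csmul E (csmul S (nn W) + csmul (dDA X W * Sd) (nn X) + csmul (- S / 2 * dDA X W) (mat 1))
    + csmul (E * tau W) (csmul C (mat 1) + csmul S (nn X))"

definition mexpfG where
  "mexpfG E C S X = csmul E (csmul C (mat 1) + csmul S (nn X))"

lemma ident1:
  assumes "D = DA X" "C = S - S * Q * D" "Sd = - S * Q / 2"
  shows "mexpdG E C S Sd D X (v + (1/2) *\<^sub>R comm X v + csmul (Q/4) (comm X (comm X v))) = mexpfG E C S X ** v"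
  unfolding assms mexpdG_def mexpfG_def
  by (simp add: cmat_eq nn_def tau_def trace2 dDA_def DA_def det_2 comm_def power2_eq_square) (simp add: scaleR_conv_of_real field_simps)

lemma ident2:
  assumes "D = DA X" "C = S - S * Q * D" "Sd = - S * Q / 2"
  shows "mexpdG E C S Sd D X (v - (1/2) *\<^sub>R comm X v + csmul (Q/4) (comm X (comm X v))) = v ** mexpfG E C S X"
  unfolding assms mexpdG_def mexpfG_def
  by (simp add: cmat_eq nn_def tau_def trace2 dDA_def DA_def det_2 comm_def power2_eq_square) (simp add: scaleR_conv_of_real field_simps)

lemma inv_gen0: "mexpfG E C S X ** mexpfG E' C (-S) X = csmul (E*E'*(C^2 + DA X * S^2)) (mat 1)"
  unfolding mexpfG_def
  by (simp add: cmat_eq nn_def tau_def trace2 DA_def det_2 power2_eq_square) (simp add: field_simps)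

lemma inv_gen0': "mexpfG E' C (-S) X ** mexpfG E C S X = csmul (E*E'*(C^2 + DA X * S^2)) (mat 1)"
  unfolding mexpfG_def
  by (simp add: cmat_eq nn_def tau_def trace2 DA_def det_2 power2_eq_square) (simp add: field_simps)

lemma csmul_one_mat: "csmul 1 (mat 1) = (mat 1 :: cmat2)"
  by (simp add: cmat_eq)

lemma Ccal_rels:
  assumes "Sin z \<noteq> 0"
  shows "Cos z = Sin z - Sin z * Ccal z * z" "Sind z = - Sin z * Ccal z / 2"
proof -
  show "Cos z = Sin z - Sin z * Ccal z * z"
  proof (cases "z = 0")
    case True then show ?thesis by simp
  next
    case False then show ?thesis using assms by (simp add: Ccal_def Cot_def field_simps)
  qed
  show "Sind z = - Sin z * Ccal z / 2"
  proof (cases "z = 0")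
    case True then show ?thesis by (simp add: Sind_0 Ccal_def)
  next
    case False
    have "2 * z * Sind z = Cos z - Sin z" by (rule Sind_rel)
    then have c: "Cos z = Sin z + 2 * z * Sind z" by (simp add: algebra_simps)
    show ?thesis using False assms unfolding Ccal_def Cot_def c by (simp add: field_simps)
  qed
qed




lemma lin_lmul: "bounded_linear (\<lambda>Y::cmat2. (M::cmat2) ** Y)"
  unfolding linear_conv_bounded_linear[symmetric]
  by (rule linearI) (simp_all add: cmat_eq algebra_simps)

lemma lin_rmul: "bounded_linear (\<lambda>Y::cmat2. Y ** (M::cmat2))"
  unfolding linear_conv_bounded_linear[symmetric]
  by (rule linearI) (simp_all add: cmat_eq algebra_simps)

definition W1 :: "cmat2 \<Rightarrow> complex \<Rightarrow> cmat2 \<Rightarrow> cmat2" where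
  "W1 A Q u = u + (1/2) *\<^sub>R comm A u + csmul (Q/4) (comm A (comm A u))"
definition W2 :: "cmat2 \<Rightarrow> complex \<Rightarrow> cmat2 \<Rightarrow> cmat2" where
  "W2 A Q u = u - (1/2) *\<^sub>R comm A u + csmul (Q/4) (comm A (comm A u))"

lemma lin_W1: "linear (W1 A Q)"
  by (rule linearI) (simp_all add: W1_def comm_def cmat_eq, simp_all add: scaleR_conv_of_real field_simps)

lemma W1_scale: "W1 A Q (t *\<^sub>R u) = t *\<^sub>R W1 A Q u"
  using linear_scale[OF lin_W1] by simp

lemma mexpd_0: "mexpd 0 W = W"
  by (simp add: mexpd_def cmat_eq nn_def tau_def trace2 dDA_def DA_def det_2)

lemma mexpf_0: "mexpf 0 = mat 1"
  by (simp add: mexpf_def cmat_eq nn_def tau_def trace2 DA_def det_2)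

theorem lemma3p1:
  fixes A v :: cmat2
  assumes "\<forall>z\<in>spec A. \<bar>Im z\<bar> < pi"
  shows "((\<lambda>t::real. mlog (mexp A ** mexp (t *\<^sub>R v))) has_vector_derivative
            (v + (1/2) *\<^sub>R comm A v + csmul (Ccal (DA A) / 4) (comm A (comm A v)))) (at 0)
       \<and> ((\<lambda>t::real. mlog (mexp (t *\<^sub>R v) ** mexp A)) has_vector_derivative
            (v - (1/2) *\<^sub>R comm A v + csmul (Ccal (DA A) / 4) (comm A (comm A v)))) (at 0)"
proof -
  have sA: "strip A" using assms by (simp add: strip_def)
  have mexp_eq: "mexp = mexpf" by (rule ext) (rule mexp_formula)
  define \<tau> where "\<tau> = tau A"
  define D where "D = DA A"
  define Q where "Q = Ccal D"
  define M where "M = mexpf A"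
  define Mi where "Mi = mexpfG (exp (- \<tau>)) (Cos D) (- Sin D) A"
  have SD: "Sin D \<noteq> 0" unfolding D_def by (rule strip_Sin_nz[OF sA])
  have MG: "M = mexpfG (exp \<tau>) (Cos D) (Sin D) A" by (simp add: M_def mexpf_def mexpfG_def \<tau>_def D_def)
  have CS: "Cos D ^ 2 + DA A * Sin D ^ 2 = 1" using Cos_Sin_id[of D] by (simp add: D_def)
  have ee: "exp \<tau> * exp (-\<tau>) = 1" by (simp add: exp_minus_inverse)
  have MMi: "M ** Mi = mat 1" unfolding MG Mi_def inv_gen0 CS ee by (simp add: csmul_one_mat)
  have MiM: "Mi ** M = mat 1" unfolding MG Mi_def inv_gen0' CS ee by (simp add: csmul_one_mat)
  have dG: "mexpd A W = mexpdG (exp \<tau>) (Cos D) (Sin D) (Sind D) D A W" for W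
    by (simp add: mexpd_def mexpdG_def \<tau>_def D_def)
  have id1: "mexpd A (W1 A Q u) = M ** u" for u
    unfolding dG MG W1_def Q_def
    by (rule ident1) (simp_all add: D_def Ccal_rels[OF SD, unfolded D_def])
  have id2: "mexpd A (W2 A Q u) = u ** M" for u
    unfolding dG MG W2_def Q_def
    by (rule ident2) (simp_all add: D_def Ccal_rels[OF SD, unfolded D_def])
  define G where "G Z = W1 A Q (Mi ** Z)" for Z
  have fG: "mexpd A \<circ> G = id"
    by (rule ext) (simp add: G_def id1 matrix_mul_assoc MMi)
  have linG: "linear G"
    unfolding G_def using linear_compose[OF bounded_linear.linear[OF lin_lmul[of Mi]] lin_W1]
    by (simp add: o_def)
  have derA: "(mexp has_derivative mexpd A) (at A)" unfolding mexp_eq by (rule mexpf_deriv)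
  have Gf: "G \<circ> mexpd A = id"
    using linear_inverse_left[OF has_derivative_linear[OF derA] linG] fG by simp
  obtain S where S: "open S" "A \<in> S" "\<And>X. X \<in> S \<Longrightarrow> strip X" using strip_nhd[OF sA] by metis
  have cont: "continuous_on S mexp"
    unfolding mexp_eq
    by (intro continuous_at_imp_continuous_on ballI has_derivative_continuous[OF mexpf_deriv])
  have dlog: "(mlog has_derivative G) (at (mexp A))"
    by (rule has_derivative_inverse_strong[OF S(1,2) cont _ derA fG]) (simp add: mlog_mexp S(3))
  have dlog': "(mlog has_derivative G) (at M)" using dlog by (simp add: mexp_eq M_def)
  have dv: "((\<lambda>t::real. t *\<^sub>R v) has_derivative (\<lambda>t. t *\<^sub>R v)) (at 0)"
    by (rule bounded_linear_imp_has_derivative[OF bounded_linear_scaleR_left])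
  have de: "((\<lambda>t::real. mexpf (t *\<^sub>R v)) has_derivative (\<lambda>t. t *\<^sub>R v)) (at 0)"
  proof -
    have "(mexpf has_derivative mexpd 0) (at ((0::real) *\<^sub>R v))" by (simp add: mexpf_deriv)
    from has_derivative_compose[OF dv this] show ?thesis by (simp add: mexpd_0)
  qed
  have d1: "((\<lambda>t::real. M ** mexpf (t *\<^sub>R v)) has_derivative (\<lambda>t. M ** (t *\<^sub>R v))) (at 0)"
    by (rule bounded_linear.has_derivative[OF lin_lmul de])
  have d2: "((\<lambda>t::real. mexpf (t *\<^sub>R v) ** M) has_derivative (\<lambda>t. (t *\<^sub>R v) ** M)) (at 0)"
    by (rule bounded_linear.has_derivative[OF lin_rmul de])
  have c1: "((\<lambda>t::real. mlog (M ** mexpf (t *\<^sub>R v))) has_derivative (\<lambda>t. G (M ** (t *\<^sub>R v)))) (at 0)"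
    using has_derivative_compose[OF d1, of mlog G] dlog' by (simp add: mexpf_0)
  have c2: "((\<lambda>t::real. mlog (mexpf (t *\<^sub>R v) ** M)) has_derivative (\<lambda>t. G ((t *\<^sub>R v) ** M))) (at 0)"
    using has_derivative_compose[OF d2, of mlog G] dlog' by (simp add: mexpf_0)
  have g1: "G (M ** (t *\<^sub>R v)) = t *\<^sub>R W1 A Q v" for t
  proof -
    have "Mi ** (M ** (t *\<^sub>R v)) = t *\<^sub>R v" by (simp add: matrix_mul_assoc MiM)
    then show ?thesis by (simp add: G_def W1_scale)
  qed
  have g2: "G ((t *\<^sub>R v) ** M) = t *\<^sub>R W2 A Q v" for t
  proof -
    have "G ((t *\<^sub>R v) ** M) = t *\<^sub>R G (v ** M)"
      using linear_scale[OF bounded_linear.linear[OF lin_rmul[of M]], of t v] linear_scale[OF linG]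
      by simp
    also have "G (v ** M) = W2 A Q v" using Gf id2[of v] by (metis comp_apply id_apply)
    finally show ?thesis .
  qed
  show ?thesis
    unfolding has_vector_derivative_def mexp_eq M_def[symmetric]
    using c1 c2 unfolding g1 g2 by (simp add: W1_def W2_def Q_def D_def)
qed


end
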